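(* Let $V$ be a real vector space and let $C$ be a convex cone in $V$ with $0\in C$. Suppose $Y$ is a $C$-antichain-convex subset of $V$. Then: (1) for each $y\in\operatorname{co}(Y)$ there exists $z\in Y$ such that $z\in y+C$ (i.e., $y$ is $C$-Pareto dominated by some element of $Y$); (2) for each $y\in\operatorname{co}(Y)$ there exists $x\in Y$ such that $y\in x+C$ (i.e., $y$ $C$-Pareto dominates some element of $Y$).
   Context: A cone in a real vector space $V$ is a subset $C$ with $\lambda C\subseteq C$ for all $\lambda>0$ (it may be empty and need not contain $0$). A subset $S\subseteq V$ is $C$-antichain-convex iff for all $x,y\in S$ and $\lambda\in[0,1]$ with $y-x\notin C\cup(-C)$ one has $\lambda x+(1-\lambda)y\in S$. An element $v\in V$ is $C$-Pareto dominated by $z\in V$ iff $z\in v+C$. $\operatorname{co}$ denotes the convex hull. *)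

theory Defs
  imports "HOL-Analysis.Analysis"
begin

text \<open>A cone in the sense of the paper: closed under multiplication by positive scalars
  (may be empty, need not contain 0).\<close>
definition pos_cone :: "'a::real_vector set \<Rightarrow> bool" where
  "pos_cone C \<longleftrightarrow> (\<forall>t::real. t > 0 \<longrightarrow> (\<forall>c\<in>C. t *\<^sub>R c \<in> C))"

definition antichain_convex :: "'a::real_vector set \<Rightarrow> 'a set \<Rightarrow> bool" where
  "antichain_convex C S \<longleftrightarrow>
     (\<forall>x\<in>S. \<forall>y\<in>S. \<forall>t::real. 0 \<le> t \<and> t \<le> 1 \<and> y - x \<notin> C \<union> uminus ` C
        \<longrightarrow> t *\<^sub>R x + (1 - t) *\<^sub>R y \<in> S)"

end

theory Submission
  imports Defs
begin

lemma cone_smul: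
  assumes "pos_cone C" "0 \<in> C" "c \<in> C" "(t::real) \<ge> 0"
  shows "t *\<^sub>R c \<in> C"
proof (cases "t = 0")
  case True then show ?thesis using assms by simp
next
  case False then show ?thesis using assms unfolding pos_cone_def by auto
qed

lemma cone_add:
  assumes "pos_cone C" "convex C" "c \<in> C" "d \<in> C"
  shows "c + d \<in> C"
proof -
  have "(1/2::real) *\<^sub>R c + (1/2::real) *\<^sub>R d \<in> C"
    using assms(2-4) unfolding convex_def by auto
  then have "(2::real) *\<^sub>R ((1/2::real) *\<^sub>R c + (1/2::real) *\<^sub>R d) \<in> C"
    using assms(1) unfolding pos_cone_def by auto
  moreover have "(2::real) *\<^sub>R ((1/2::real) *\<^sub>R c + (1/2::real) *\<^sub>R d) = c + d"
    by (simp add: scaleR_add_right)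
  ultimately show ?thesis by simp
qed

lemma two_point:
  assumes "pos_cone C" "convex C" "0 \<in> C" "antichain_convex C Y"
    and "a \<in> Y" "b \<in> Y" "0 \<le> t" "t \<le> (1::real)"
  shows "\<exists>z\<in>Y. z - (t *\<^sub>R a + (1 - t) *\<^sub>R b) \<in> C"
proof (cases "b - a \<in> C \<union> uminus ` C")
  case False
  then have "t *\<^sub>R a + (1 - t) *\<^sub>R b \<in> Y"
    using assms unfolding antichain_convex_def by blast
  then show ?thesis using assms(3) by (intro bexI[of _ "t *\<^sub>R a + (1 - t) *\<^sub>R b"]) auto
next
  case True
  then show ?thesis
  proof
    assume h: "b - a \<in> C"
    have "b - (t *\<^sub>R a + (1 - t) *\<^sub>R b) = t *\<^sub>R (b - a)"
      by (simp add: algebra_simps)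
    moreover have "t *\<^sub>R (b - a) \<in> C" using cone_smul[OF assms(1,3) h assms(7)] .
    ultimately show ?thesis using assms(6) by (intro bexI[of _ b]) simp_all
  next
    assume "b - a \<in> uminus ` C"
    then obtain c where "c \<in> C" "b - a = - c" by blast
    then have h: "a - b \<in> C" by (metis minus_diff_eq minus_minus)
    have "a - (t *\<^sub>R a + (1 - t) *\<^sub>R b) = (1 - t) *\<^sub>R (a - b)"
      by (simp add: algebra_simps)
    moreover have "(1 - t) *\<^sub>R (a - b) \<in> C" using cone_smul[OF assms(1,3) h] assms(8) by simp
    ultimately show ?thesis using assms(5) by (intro bexI[of _ a]) simp_all
  qed
qed

lemma part1:
  assumes "pos_cone C" "convex C" "0 \<in> C" "antichain_convex C Y"
  shows "\<forall>y\<in>convex hull Y. \<exists>z\<in>Y. z \<in> (+) y ` C"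
proof -
  let ?S = "{y. \<exists>z\<in>Y. z - y \<in> C}"
  have "Y \<subseteq> ?S" using assms(3) by force
  moreover have "convex ?S"
    unfolding convex_def
  proof (intro allI impI ballI)
    fix x y and u v :: real
    assume x: "x \<in> ?S" and y: "y \<in> ?S" and uv: "0 \<le> u" "0 \<le> v" "u + v = 1"
    obtain z1 where z1: "z1 \<in> Y" "z1 - x \<in> C" using x by blast
    obtain z2 where z2: "z2 \<in> Y" "z2 - y \<in> C" using y by blast
    have v: "v = 1 - u" using uv by simp
    obtain z where z: "z \<in> Y" "z - (u *\<^sub>R z1 + (1 - u) *\<^sub>R z2) \<in> C"
      using two_point[OF assms z1(1) z2(1) uv(1)] uv by auto
    have c1: "u *\<^sub>R (z1 - x) \<in> C" using cone_smul assms z1 uv by blast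
    have c2: "(1 - u) *\<^sub>R (z2 - y) \<in> C" using cone_smul[OF assms(1,3) z2(2)] uv by simp
    have "z - (u *\<^sub>R x + v *\<^sub>R y) =
      (z - (u *\<^sub>R z1 + (1 - u) *\<^sub>R z2)) + (u *\<^sub>R (z1 - x) + (1 - u) *\<^sub>R (z2 - y))"
      by (simp add: v algebra_simps)
    moreover have "\<dots> \<in> C" using cone_add[OF assms(1,2)] z(2) c1 c2 by blast
    ultimately have "z - (u *\<^sub>R x + v *\<^sub>R y) \<in> C" by (simp only:)
    then show "u *\<^sub>R x + v *\<^sub>R y \<in> ?S" using z(1) by blast
  qed
  ultimately have "convex hull Y \<subseteq> ?S" by (rule hull_minimal)
  then show ?thesis
    by (force simp: image_iff eq_diff_eq' intro: bexI)
qed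

theorem lemma5:
  fixes C Y :: "'a::real_vector set"
  assumes "pos_cone C" and "convex C" and "0 \<in> C"
    and "antichain_convex C Y"
  shows "(\<forall>y\<in>convex hull Y. \<exists>z\<in>Y. z \<in> (+) y ` C)
       \<and> (\<forall>y\<in>convex hull Y. \<exists>x\<in>Y. y \<in> (+) x ` C)"
proof
  show "\<forall>y\<in>convex hull Y. \<exists>z\<in>Y. z \<in> (+) y ` C" using part1 assms by blast
  let ?D = "uminus ` C"
  have p: "pos_cone ?D" using assms(1) unfolding pos_cone_def
    by (auto simp: image_iff)
  have c: "convex ?D" using assms(2) by (simp add: convex_negations)
  have z: "0 \<in> ?D" using assms(3) by force
  have uu: "uminus ` uminus ` C = C" by (simp add: image_image)
  have a: "antichain_convex ?D Y" using assms(4) by (simp add: antichain_convex_def uu Un_commute)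
  have h: "\<forall>y\<in>convex hull Y. \<exists>z\<in>Y. z \<in> (+) y ` ?D" using part1[OF p c z a] .
  show "\<forall>y\<in>convex hull Y. \<exists>x\<in>Y. y \<in> (+) x ` C"
  proof
    fix y assume "y \<in> convex hull Y"
    then obtain x where "x \<in> Y" "x \<in> (+) y ` ?D" using h by blast
    then obtain c where "c \<in> C" "x = y - c" by auto
    then have "y = x + c" by simp
    then show "\<exists>x\<in>Y. y \<in> (+) x ` C" using \<open>x \<in> Y\<close> \<open>c \<in> C\<close> by blast
  qed
qed

end
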